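(* Let $A$ be a simplicial space, $x\in A_n$ a non-degenerate simplex, $N\ge n$, and $(U_\sigma)_{\sigma:[N]\twoheadrightarrow[n]}$ an $x$-admissible family, extended to all epimorphisms $\sigma:[k]\twoheadrightarrow[n]$ with $k\le N$ by $U_\sigma:=\bigcap_{\tau:[N]\twoheadrightarrow[k]}(\tau^* )^{-1}(U_{\sigma\circ\tau})$. For an epimorphism $\sigma:[k]\twoheadrightarrow[n]$ (any $k\in\mathbb{N}$) let $I_\sigma$ be the set of monomorphisms $\delta:[k']\hookrightarrow[k]$ in $\Delta$ with $k'\le N$ and $\sigma\circ\delta$ an epimorphism, and set $U(\sigma):=\bigcap_{\delta\in I_\sigma}(\delta^* )^{-1}(U_{\sigma\circ\delta})\subset A_k$. Then, for every epimorphism $\sigma:[k]\twoheadrightarrow[n]$: (a) $U(\sigma)$ is an open neighborhood of $\sigma^*(x)$ in $A_k$; (b) $U(\sigma)\subset U_\sigma$ whenever $k\le N$; (c) for every monomorphism $\delta:[i]\hookrightarrow[k]$ such that $\sigma\circ\delta$ is onto, $\delta^*(U(\sigma))\subset U(\sigma\circ\delta)$; (d) for every epimorphism $\tau:[k']\twoheadrightarrow[k]$, $\tau^*(U(\sigma))\subset U(\sigma\circ\tau)$; (e) for every epimorphism $\tau:[k]\twoheadrightarrow[k']$, $\tau^*(A_{k'})\cap U(\sigma)\ne\emptyset$ if and only if there exists an epimorphism $\rho:[k']\twoheadrightarrow[n]$ with $\sigma=\rho\circ\tau$.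
   Context: $\Delta$ is the simplicial category with objects $[n]=\{0,\dots,n\}$ and non-decreasing maps as morphisms. A simplicial space is a contravariant functor $A:\Delta\to\mathrm{Top}$, with $A_n:=A([n])$ and $\delta^*:=A(\delta)$. A point of $A_n$ is degenerate if it lies in the image of a degeneracy map $A(\sigma_i^n)$, where $\sigma_i^n:[n]\to[n-1]$ sends $j\le i$ to $j$ and $j>i$ to $j-1$. For $N\ge n$ and non-degenerate $x\in A_n$, a family $(U_\sigma)_{\sigma:[N]\twoheadrightarrow[n]}$ indexed by the epimorphisms $[N]\twoheadrightarrow[n]$ is called $x$-admissible when (i) each $U_\sigma$ is an open neighborhood of $\sigma^*(x)$ in $A_N$, and (ii) for every epimorphism $\sigma:[N]\twoheadrightarrow[n]$ and every epimorphism $\tau:[N]\twoheadrightarrow[m]$, $U_\sigma\cap\tau^*(A_m)\ne\emptyset$ holds if and only if there exists an epimorphism $\rho:[m]\twoheadrightarrow[n]$ with $\sigma=\rho\circ\tau$. *)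

theory Defs
  imports "HOL-Analysis.Analysis" "HOL-Library.FuncSet"
begin

(* Morphisms [m] -> [n] of the simplicial category Delta are represented as
   extensional functions on {0..m} (value undefined outside), non-decreasing,
   with values in {0..n}. *)

definition delta_hom :: "nat \<Rightarrow> nat \<Rightarrow> (nat \<Rightarrow> nat) \<Rightarrow> bool" where
  "delta_hom m n f \<longleftrightarrow> f \<in> {0..m} \<rightarrow>\<^sub>E {0..n} \<and>
     (\<forall>i j. i \<le> j \<longrightarrow> j \<le> m \<longrightarrow> f i \<le> f j)"

definition delta_epi :: "nat \<Rightarrow> nat \<Rightarrow> (nat \<Rightarrow> nat) \<Rightarrow> bool" where
  "delta_epi m n f \<longleftrightarrow> delta_hom m n f \<and> f ` {0..m} = {0..n}"

definition delta_mono :: "nat \<Rightarrow> nat \<Rightarrow> (nat \<Rightarrow> nat) \<Rightarrow> bool" where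
  "delta_mono m n f \<longleftrightarrow> delta_hom m n f \<and> inj_on f {0..m}"

definition delta_id :: "nat \<Rightarrow> (nat \<Rightarrow> nat)" where
  "delta_id n = restrict id {0..n}"

definition delta_comp :: "nat \<Rightarrow> (nat \<Rightarrow> nat) \<Rightarrow> (nat \<Rightarrow> nat) \<Rightarrow> (nat \<Rightarrow> nat)" where
  "delta_comp m g f = compose {0..m} g f"

definition degeneracy :: "nat \<Rightarrow> nat \<Rightarrow> (nat \<Rightarrow> nat)" where
  "degeneracy n i = restrict (\<lambda>j. if j \<le> i then j else j - 1) {0..n}"

(* A simplicial space: spaces X n = A_n (on a common carrier type) and
   act m n f = A(f) : A_n -> A_m for f : [m] -> [n], a contravariant functor. *)
definition simplicial_space ::
  "(nat \<Rightarrow> 'a topology) \<Rightarrow> (nat \<Rightarrow> nat \<Rightarrow> (nat \<Rightarrow> nat) \<Rightarrow> 'a \<Rightarrow> 'a) \<Rightarrow> bool" where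
  "simplicial_space X act \<longleftrightarrow>
     (\<forall>m n f. delta_hom m n f \<longrightarrow> continuous_map (X n) (X m) (act m n f)) \<and>
     (\<forall>n y. y \<in> topspace (X n) \<longrightarrow> act n n (delta_id n) y = y) \<and>
     (\<forall>m k n f g y. delta_hom m k f \<longrightarrow> delta_hom k n g \<longrightarrow> y \<in> topspace (X n) \<longrightarrow>
        act m n (delta_comp m g f) y = act m k f (act k n g y))"

definition degenerate ::
  "(nat \<Rightarrow> 'a topology) \<Rightarrow> (nat \<Rightarrow> nat \<Rightarrow> (nat \<Rightarrow> nat) \<Rightarrow> 'a \<Rightarrow> 'a) \<Rightarrow> nat \<Rightarrow> 'a \<Rightarrow> bool" where
  "degenerate X act n y \<longleftrightarrow>
     (\<exists>i. 1 \<le> n \<and> i \<le> n - 1 \<and> y \<in> act n (n - 1) (degeneracy n i) ` topspace (X (n - 1)))"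

definition admissible ::
  "(nat \<Rightarrow> 'a topology) \<Rightarrow> (nat \<Rightarrow> nat \<Rightarrow> (nat \<Rightarrow> nat) \<Rightarrow> 'a \<Rightarrow> 'a) \<Rightarrow> nat \<Rightarrow> 'a \<Rightarrow> nat
     \<Rightarrow> ((nat \<Rightarrow> nat) \<Rightarrow> 'a set) \<Rightarrow> bool" where
  "admissible X act n x N U \<longleftrightarrow>
     (\<forall>\<sigma>. delta_epi N n \<sigma> \<longrightarrow> openin (X N) (U \<sigma>) \<and> act N n \<sigma> x \<in> U \<sigma>) \<and>
     (\<forall>\<sigma> m \<tau>. delta_epi N n \<sigma> \<longrightarrow> delta_epi N m \<tau> \<longrightarrow>
        (U \<sigma> \<inter> act N m \<tau> ` topspace (X m) \<noteq> {} \<longleftrightarrow>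
         (\<exists>\<rho>. delta_epi m n \<rho> \<and> \<sigma> = delta_comp N \<rho> \<tau>)))"

definition U_ext ::
  "(nat \<Rightarrow> 'a topology) \<Rightarrow> (nat \<Rightarrow> nat \<Rightarrow> (nat \<Rightarrow> nat) \<Rightarrow> 'a \<Rightarrow> 'a) \<Rightarrow> nat
     \<Rightarrow> ((nat \<Rightarrow> nat) \<Rightarrow> 'a set) \<Rightarrow> nat \<Rightarrow> (nat \<Rightarrow> nat) \<Rightarrow> 'a set" where
  "U_ext X act N U k \<sigma> =
     {y \<in> topspace (X k). \<forall>\<tau>. delta_epi N k \<tau> \<longrightarrow> act N k \<tau> y \<in> U (delta_comp N \<sigma> \<tau>)}"

definition U_big ::
  "(nat \<Rightarrow> 'a topology) \<Rightarrow> (nat \<Rightarrow> nat \<Rightarrow> (nat \<Rightarrow> nat) \<Rightarrow> 'a \<Rightarrow> 'a) \<Rightarrow> nat \<Rightarrow> nat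
     \<Rightarrow> ((nat \<Rightarrow> nat) \<Rightarrow> 'a set) \<Rightarrow> nat \<Rightarrow> (nat \<Rightarrow> nat) \<Rightarrow> 'a set" where
  "U_big X act n N U k \<sigma> =
     {y \<in> topspace (X k). \<forall>k' \<delta>. k' \<le> N \<longrightarrow> delta_mono k' k \<delta> \<longrightarrow>
        delta_epi k' n (delta_comp k' \<sigma> \<delta>) \<longrightarrow>
        act k' k \<delta> y \<in> U_ext X act N U k' (delta_comp k' \<sigma> \<delta>)}"

end

theory Submission imports Defs begin

lemma hom_ext: "delta_hom m k f \<Longrightarrow> i \<notin> {0..m} \<Longrightarrow> f i = undefined"
  unfolding delta_hom_def by (auto simp: PiE_def extensional_def)
lemma hom_val: "delta_hom m k f \<Longrightarrow> i \<le> m \<Longrightarrow> f i \<le> k"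
  unfolding delta_hom_def by (auto simp: PiE_def Pi_def)
lemma hom_mono: "delta_hom m k f \<Longrightarrow> i \<le> j \<Longrightarrow> j \<le> m \<Longrightarrow> f i \<le> f j"
  unfolding delta_hom_def by auto
lemma hom_Pi: "delta_hom m k f \<Longrightarrow> f \<in> {0..m} \<rightarrow> {0..k}"
  unfolding delta_hom_def by (auto simp: PiE_def)
lemma homI: "(\<And>i. i \<le> m \<Longrightarrow> f i \<le> k) \<Longrightarrow> (\<And>i. i > m \<Longrightarrow> f i = undefined)
   \<Longrightarrow> (\<And>i j. i \<le> j \<Longrightarrow> j \<le> m \<Longrightarrow> f i \<le> f j) \<Longrightarrow> delta_hom m k f"
  unfolding delta_hom_def by (auto simp: PiE_def Pi_def extensional_def)

lemma comp_apply: "i \<le> m \<Longrightarrow> delta_comp m g f i = g (f i)"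
  by (simp add: delta_comp_def compose_def)

lemma hom_comp: "delta_hom m k f \<Longrightarrow> delta_hom k n g \<Longrightarrow> delta_hom m n (delta_comp m g f)"
  apply (rule homI)
  apply (simp add: comp_apply hom_val)
  apply (simp add: delta_comp_def compose_def)
  by (simp add: comp_apply hom_mono hom_val)

lemma epi_surj: "delta_epi m n f \<Longrightarrow> j \<le> n \<Longrightarrow> \<exists>i\<le>m. f i = j"
  unfolding delta_epi_def by (metis atLeastAtMost_iff imageE le0 order_refl)

lemma epiI: "delta_hom m n f \<Longrightarrow> (\<And>j. j \<le> n \<Longrightarrow> \<exists>i\<le>m. f i = j) \<Longrightarrow> delta_epi m n f"
  unfolding delta_epi_def using hom_val by fastforce

lemma epi_hom: "delta_epi m n f \<Longrightarrow> delta_hom m n f" by (simp add: delta_epi_def)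
lemma mono_hom: "delta_mono m n f \<Longrightarrow> delta_hom m n f" by (simp add: delta_mono_def)

lemma epi_comp: "delta_epi m k f \<Longrightarrow> delta_epi k n g \<Longrightarrow> delta_epi m n (delta_comp m g f)"
proof (rule epiI)
  assume a: "delta_epi m k f" "delta_epi k n g"
  show "delta_hom m n (delta_comp m g f)" using a epi_hom hom_comp by blast
  fix j assume "j \<le> n"
  then obtain i where i: "i \<le> k" "g i = j" using a epi_surj by blast
  then obtain i' where "i' \<le> m" "f i' = i" using a epi_surj by blast
  thus "\<exists>i\<le>m. delta_comp m g f i = j" using i comp_apply by metis
qed

lemma mono_comp: "delta_mono m k f \<Longrightarrow> delta_mono k n g \<Longrightarrow> delta_mono m n (delta_comp m g f)"
proof -
  assume a: "delta_mono m k f" "delta_mono k n g"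
  have "inj_on (g \<circ> f) {0..m}"
    using a unfolding delta_mono_def
    by (meson comp_inj_on hom_Pi image_subset_iff_funcset inj_on_subset)
  hence "inj_on (delta_comp m g f) {0..m}"
    by (rule inj_on_cong[THEN iffD1, rotated]) (simp add: comp_apply)
  thus ?thesis using a unfolding delta_mono_def using hom_comp by blast
qed

lemma epi_of_comp: "delta_hom m k f \<Longrightarrow> delta_hom k n g \<Longrightarrow> delta_epi m n (delta_comp m g f) \<Longrightarrow> delta_epi k n g"
proof -
  assume f: "delta_hom m k f" and g: "delta_hom k n g" and e: "delta_epi m n (delta_comp m g f)"
  show ?thesis
  proof (rule epiI[OF g])
    fix j assume "j \<le> n"
    then obtain i where i: "i \<le> m" "delta_comp m g f i = j" using epi_surj[OF e] by blast
    hence "g (f i) = j" by (simp add: comp_apply)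
    moreover have "f i \<le> k" using hom_val[OF f i(1)] .
    ultimately show "\<exists>i\<le>k. g i = j" by blast
  qed
qed

lemma comp_assoc: "delta_hom m k f \<Longrightarrow>
  delta_comp m h (delta_comp m g f) = delta_comp m (delta_comp k h g) f"
  unfolding delta_comp_def using compose_assoc hom_Pi by metis

lemma comp_id_right: "delta_hom m n f \<Longrightarrow> delta_comp m f (delta_id m) = f"
  by (rule ext) (auto simp: delta_comp_def delta_id_def compose_def hom_ext)
lemma comp_id_left: "delta_hom m n f \<Longrightarrow> delta_comp m (delta_id n) f = f"
  by (rule ext) (auto simp: delta_comp_def delta_id_def compose_def hom_ext hom_val)

lemma id_mono: "delta_mono n n (delta_id n)"
  unfolding delta_mono_def delta_id_def delta_hom_def by auto
lemma id_hom: "delta_hom n n (delta_id n)" using id_mono mono_hom by blast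

lemma epi_le: "delta_epi m n f \<Longrightarrow> n \<le> m"
proof -
  assume e: "delta_epi m n f"
  have "card {0..n} \<le> card {0..m}" using e unfolding delta_epi_def
    by (metis card_image_le finite_atLeastAtMost)
  thus ?thesis by simp
qed

lemma epi_lt: "delta_epi m n f \<Longrightarrow> \<not> inj_on f {0..m} \<Longrightarrow> n < m"
proof -
  assume e: "delta_epi m n f" "\<not> inj_on f {0..m}"
  have "card (f ` {0..m}) \<noteq> card {0..m}" using e(2) inj_on_iff_eq_card by blast
  moreover have "card (f ` {0..m}) \<le> card {0..m}" by (rule card_image_le) simp
  ultimately have "card {0..n} < card {0..m}" using e(1) unfolding delta_epi_def by simp
  thus ?thesis by simp
qed

lemma finite_homs: "finite {f. delta_hom m k f}"
proof -
  have "{f. delta_hom m k f} \<subseteq> PiE {0..m} (\<lambda>_. {0..k})" unfolding delta_hom_def by auto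
  thus ?thesis by (rule finite_subset) (simp add: finite_PiE)
qed



lemma factorization:
  assumes g: "delta_hom m k g"
  shows "\<exists>j e d. delta_epi m j e \<and> delta_mono j k d \<and> g = delta_comp m d e"
proof -
  define S where "S = g ` {0..m}"
  define L where "L = sorted_list_of_set S"
  define j where "j = card S - 1"
  have finS: "finite S" unfolding S_def by simp
  have neS: "S \<noteq> {}" unfolding S_def by auto
  have lenL: "length L = Suc j" unfolding L_def j_def using finS neS
    by (simp add: card_gt_0_iff)
  have setL: "set L = S" unfolding L_def using finS by simp
  have sortL: "sorted_wrt (<) L" unfolding L_def by (rule strict_sorted_list_of_set)
  have distL: "distinct L" unfolding L_def by simp
  have Sk: "\<And>s. s \<in> S \<Longrightarrow> s \<le> k" unfolding S_def using g hom_val by auto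
  have less: "\<And>a b. a < b \<Longrightarrow> b \<le> j \<Longrightarrow> L ! a < L ! b"
    using sortL lenL sorted_wrt_nth_less by (metis le_imp_less_Suc)
  have ex1: "\<And>a. a \<le> m \<Longrightarrow> \<exists>!i. i \<le> j \<and> L ! i = g a"
  proof -
    fix a assume "a \<le> m"
    hence "g a \<in> set L" using setL S_def by auto
    then obtain i where "i < length L" "L ! i = g a" by (metis in_set_conv_nth)
    thus "\<exists>!i. i \<le> j \<and> L ! i = g a"
      using lenL distL nth_eq_iff_index_eq by (metis less_Suc_eq_le)
  qed
  define e where "e = restrict (\<lambda>a. THE i. i \<le> j \<and> L ! i = g a) {0..m}"
  define d where "d = restrict (\<lambda>i. L ! i) {0..j}"
  have e1: "\<And>a. a \<le> m \<Longrightarrow> e a \<le> j \<and> L ! (e a) = g a"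
  proof -
    fix a assume "a \<le> m"
    have "(THE i. i \<le> j \<and> L ! i = g a) \<le> j \<and> L ! (THE i. i \<le> j \<and> L ! i = g a) = g a"
      using ex1[OF \<open>a \<le> m\<close>] by (rule theI')
    thus "e a \<le> j \<and> L ! (e a) = g a" unfolding e_def using \<open>a \<le> m\<close> by simp
  qed
  have eu: "\<And>a i. a \<le> m \<Longrightarrow> i \<le> j \<Longrightarrow> L ! i = g a \<Longrightarrow> e a = i"
    using ex1 e1 by blast
  have ehom: "delta_hom m j e"
  proof (rule homI)
    show "\<And>i. i \<le> m \<Longrightarrow> e i \<le> j" using e1 by blast
    show "\<And>i. m < i \<Longrightarrow> e i = undefined" unfolding e_def by simp
    fix a b assume ab: "a \<le> b" "b \<le> m"
    show "e a \<le> e b"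
    proof (rule ccontr)
      assume "\<not> e a \<le> e b"
      hence "L ! e b < L ! e a" using less e1 ab by (meson not_le order.trans)
      hence "g b < g a" using e1 ab by (metis order.trans)
      thus False using g hom_mono ab by fastforce
    qed
  qed
  have eepi: "delta_epi m j e"
  proof (rule epiI[OF ehom])
    fix i assume "i \<le> j"
    hence "L ! i \<in> S" using setL lenL by (metis le_imp_less_Suc nth_mem)
    then obtain a where "a \<le> m" "g a = L ! i" unfolding S_def by auto
    thus "\<exists>a\<le>m. e a = i" using eu \<open>i \<le> j\<close> by metis
  qed
  have dmono: "delta_mono j k d"
    unfolding delta_mono_def
  proof
    show "delta_hom j k d"
    proof (rule homI)
      fix i assume "i \<le> j"
      hence "L ! i \<in> S" using setL lenL by (metis le_imp_less_Suc nth_mem)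
      thus "d i \<le> k" unfolding d_def using Sk \<open>i \<le> j\<close> by simp
    next
      show "\<And>i. j < i \<Longrightarrow> d i = undefined" unfolding d_def by simp
      fix a b assume ab: "a \<le> b" "b \<le> j"
      show "d a \<le> d b"
      proof (cases "a = b")
        case False
        hence "L ! a < L ! b" using less ab by simp
        thus ?thesis unfolding d_def using ab by simp
      qed simp
    qed
    show "inj_on d {0..j}"
    proof (rule inj_onI)
      fix a b assume ab: "a \<in> {0..j}" "b \<in> {0..j}" "d a = d b"
      hence e: "L ! a = L ! b" unfolding d_def by simp
      show "a = b"
      proof (rule ccontr)
        assume "a \<noteq> b"
        hence "a < b \<or> b < a" by arith
        thus False using less ab e by fastforce
      qed
    qed
  qed
  have "g = delta_comp m d e"
  proof
    fix a show "g a = delta_comp m d e a"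
    proof (cases "a \<le> m")
      case True thus ?thesis using e1 by (simp add: comp_apply d_def)
    next
      case False thus ?thesis using g hom_ext by (simp add: delta_comp_def compose_def)
    qed
  qed
  thus ?thesis using eepi dmono by blast
qed



lemma openin_all_finite:
  assumes "finite F" "\<And>p. p \<in> F \<Longrightarrow> openin T {y \<in> topspace T. P p y}"
  shows "openin T {y \<in> topspace T. \<forall>p\<in>F. P p y}"
  using assms
proof (induction F rule: finite_induct)
  case empty then show ?case by simp
next
  case (insert a F)
  have eq: "{y \<in> topspace T. \<forall>p\<in>insert a F. P p y} =
        {y \<in> topspace T. P a y} \<inter> {y \<in> topspace T. \<forall>p\<in>F. P p y}" by auto
  have o1: "openin T {y \<in> topspace T. P a y}" using insert.prems by simp
  have o2: "openin T {y \<in> topspace T. \<forall>p\<in>F. P p y}" using insert.IH insert.prems by simp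
  show ?case unfolding eq using o1 o2 by (rule openin_Int)
qed

lemma act_top: "simplicial_space X act \<Longrightarrow> delta_hom m n f \<Longrightarrow> y \<in> topspace (X n)
   \<Longrightarrow> act m n f y \<in> topspace (X m)"
proof -
  assume a: "simplicial_space X act" "delta_hom m n f" "y \<in> topspace (X n)"
  have "continuous_map (X n) (X m) (act m n f)" using a unfolding simplicial_space_def by blast
  hence "act m n f \<in> topspace (X n) \<rightarrow> topspace (X m)" by (simp add: continuous_map_def)
  thus ?thesis using a(3) by (rule funcset_mem)
qed

lemma act_cont: "simplicial_space X act \<Longrightarrow> delta_hom m n f \<Longrightarrow> continuous_map (X n) (X m) (act m n f)"
  unfolding simplicial_space_def by blast

lemma act_comp: "simplicial_space X act \<Longrightarrow> delta_hom m k f \<Longrightarrow> delta_hom k n g \<Longrightarrow> y \<in> topspace (X n)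
   \<Longrightarrow> act m n (delta_comp m g f) y = act m k f (act k n g y)"
  unfolding simplicial_space_def by blast

lemma act_id: "simplicial_space X act \<Longrightarrow> y \<in> topspace (X n) \<Longrightarrow> act n n (delta_id n) y = y"
  unfolding simplicial_space_def by blast

lemma UE_open:
  assumes ss: "simplicial_space X act" and ad: "admissible X act n x N U"
    and r: "delta_epi k n \<rho>"
  shows "openin (X k) (U_ext X act N U k \<rho>)"
proof -
  have "U_ext X act N U k \<rho> = {y \<in> topspace (X k). \<forall>\<tau>\<in>{\<tau>. delta_epi N k \<tau>}.
     act N k \<tau> y \<in> U (delta_comp N \<rho> \<tau>)}" unfolding U_ext_def by auto
  also have "openin (X k) \<dots>"
  proof (rule openin_all_finite)
    show "finite {\<tau>. delta_epi N k \<tau>}"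
      by (rule finite_subset[OF _ finite_homs[of N k]]) (auto simp: epi_hom)
    fix \<tau> assume "\<tau> \<in> {\<tau>. delta_epi N k \<tau>}"
    hence t: "delta_epi N k \<tau>" by simp
    have "openin (X N) (U (delta_comp N \<rho> \<tau>))"
      using ad epi_comp[OF t r] unfolding admissible_def by blast
    thus "openin (X k) {y \<in> topspace (X k). act N k \<tau> y \<in> U (delta_comp N \<rho> \<tau>)}"
      using act_cont[OF ss epi_hom[OF t]] openin_continuous_map_preimage by blast
  qed
  finally show ?thesis .
qed

lemma UE_pull:
  assumes ss: "simplicial_space X act" and z: "z \<in> U_ext X act N U j \<rho>"
    and e: "delta_epi m j e" and r: "delta_hom j n \<rho>"
  shows "act m j e z \<in> U_ext X act N U m (delta_comp m \<rho> e)"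
proof -
  have zt: "z \<in> topspace (X j)" using z unfolding U_ext_def by blast
  have "act N m \<tau> (act m j e z) \<in> U (delta_comp N (delta_comp m \<rho> e) \<tau>)"
    if t: "delta_epi N m \<tau>" for \<tau>
  proof -
    have "act N m \<tau> (act m j e z) = act N j (delta_comp N e \<tau>) z"
      using act_comp[OF ss epi_hom[OF t] epi_hom[OF e] zt] by simp
    moreover have "act N j (delta_comp N e \<tau>) z \<in> U (delta_comp N \<rho> (delta_comp N e \<tau>))"
      using z epi_comp[OF t e] unfolding U_ext_def by blast
    moreover have "delta_comp N \<rho> (delta_comp N e \<tau>) = delta_comp N (delta_comp m \<rho> e) \<tau>"
      using comp_assoc epi_hom[OF t] by blast
    ultimately show ?thesis by simp
  qed
  thus ?thesis unfolding U_ext_def using act_top[OF ss epi_hom[OF e] zt] by blast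
qed

lemma UB_pull:
  assumes ss: "simplicial_space X act" and y: "y \<in> U_big X act n N U k \<sigma>"
    and s: "delta_epi k n \<sigma>" and g: "delta_hom m k g" and mN: "m \<le> N"
    and sg: "delta_epi m n (delta_comp m \<sigma> g)"
  shows "act m k g y \<in> U_ext X act N U m (delta_comp m \<sigma> g)"
proof -
  have yt: "y \<in> topspace (X k)" using y unfolding U_big_def by blast
  obtain j e d where e: "delta_epi m j e" and d: "delta_mono j k d" and gde: "g = delta_comp m d e"
    using factorization[OF g] by blast
  have jN: "j \<le> N" using epi_le[OF e] mN by simp
  have sd: "delta_hom j n (delta_comp j \<sigma> d)" using hom_comp mono_hom[OF d] epi_hom[OF s] by blast
  have eq: "delta_comp m \<sigma> g = delta_comp m (delta_comp j \<sigma> d) e"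
    using gde comp_assoc epi_hom[OF e] by blast
  have sde: "delta_epi j n (delta_comp j \<sigma> d)"
    using epi_of_comp[OF epi_hom[OF e] sd] sg eq by simp
  have "act j k d y \<in> U_ext X act N U j (delta_comp j \<sigma> d)"
    using y jN d sde unfolding U_big_def by blast
  hence "act m j e (act j k d y) \<in> U_ext X act N U m (delta_comp m (delta_comp j \<sigma> d) e)"
    using UE_pull[OF ss _ e sd] by blast
  moreover have "act m j e (act j k d y) = act m k g y"
    using act_comp[OF ss epi_hom[OF e] mono_hom[OF d] yt] gde by simp
  ultimately show ?thesis using eq by simp
qed



theorem proposition2p3:
  fixes X :: "nat \<Rightarrow> 'a topology"
    and act :: "nat \<Rightarrow> nat \<Rightarrow> (nat \<Rightarrow> nat) \<Rightarrow> 'a \<Rightarrow> 'a"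
    and n N k :: nat and x :: 'a and U :: "(nat \<Rightarrow> nat) \<Rightarrow> 'a set"
    and \<sigma> :: "nat \<Rightarrow> nat"
  assumes "simplicial_space X act"
    and "x \<in> topspace (X n)"
    and "\<not> degenerate X act n x"
    and "n \<le> N"
    and "admissible X act n x N U"
    and "delta_epi k n \<sigma>"
  shows "(openin (X k) (U_big X act n N U k \<sigma>) \<and> act k n \<sigma> x \<in> U_big X act n N U k \<sigma>) \<and>
         (k \<le> N \<longrightarrow> U_big X act n N U k \<sigma> \<subseteq> U_ext X act N U k \<sigma>) \<and>
         (\<forall>i \<delta>. delta_mono i k \<delta> \<longrightarrow> delta_epi i n (delta_comp i \<sigma> \<delta>) \<longrightarrow>
            act i k \<delta> ` U_big X act n N U k \<sigma> \<subseteq> U_big X act n N U i (delta_comp i \<sigma> \<delta>)) \<and>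
         (\<forall>k' \<tau>. delta_epi k' k \<tau> \<longrightarrow>
            act k' k \<tau> ` U_big X act n N U k \<sigma> \<subseteq> U_big X act n N U k' (delta_comp k' \<sigma> \<tau>)) \<and>
         (\<forall>k' \<tau>. delta_epi k k' \<tau> \<longrightarrow>
            (act k k' \<tau> ` topspace (X k') \<inter> U_big X act n N U k \<sigma> \<noteq> {} \<longleftrightarrow>
             (\<exists>\<rho>. delta_epi k' n \<rho> \<and> \<sigma> = delta_comp k \<rho> \<tau>)))"
proof -
  note ss = assms(1) and xt = assms(2) and nN = assms(4) and ad = assms(5) and s = assms(6)
  note sh = epi_hom[OF s]
  have pullB: "act m k' g y \<in> U_big X act n N U m (delta_comp m \<rho> g)"
    if y: "y \<in> U_big X act n N U k' \<rho>" and r: "delta_epi k' n \<rho>" and g: "delta_hom m k' g"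
    and rg: "delta_epi m n (delta_comp m \<rho> g)" for m k' g y \<rho>
  proof -
    have yt: "y \<in> topspace (X k')" using y unfolding U_big_def by blast
    have "act k'' m \<delta> (act m k' g y) \<in> U_ext X act N U k'' (delta_comp k'' (delta_comp m \<rho> g) \<delta>)"
      if "k'' \<le> N" "delta_mono k'' m \<delta>" "delta_epi k'' n (delta_comp k'' (delta_comp m \<rho> g) \<delta>)"
      for k'' \<delta>
    proof -
      have dh: "delta_hom k'' m \<delta>" using that mono_hom by blast
      have eq: "delta_comp k'' (delta_comp m \<rho> g) \<delta> = delta_comp k'' \<rho> (delta_comp k'' g \<delta>)"
        using comp_assoc[OF dh] by simp
      have "act k'' k' (delta_comp k'' g \<delta>) y \<in> U_ext X act N U k'' (delta_comp k'' \<rho> (delta_comp k'' g \<delta>))"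
        using UB_pull[OF ss y r hom_comp[OF dh g] that(1)] that(3) eq by simp
      thus ?thesis using act_comp[OF ss dh g yt] eq by simp
    qed
    thus ?thesis unfolding U_big_def using act_top[OF ss g yt] by blast
  qed
  have memx: "act k n \<sigma> x \<in> U_big X act n N U k \<sigma>"
  proof -
    have "act k' k \<delta> (act k n \<sigma> x) \<in> U_ext X act N U k' (delta_comp k' \<sigma> \<delta>)"
      if kk: "k' \<le> N" "delta_mono k' k \<delta>" "delta_epi k' n (delta_comp k' \<sigma> \<delta>)" for k' \<delta>
    proof -
      have dh: "delta_hom k' k \<delta>" using kk mono_hom by blast
      have e1: "act k' k \<delta> (act k n \<sigma> x) = act k' n (delta_comp k' \<sigma> \<delta>) x"
        using act_comp[OF ss dh sh xt] by simp
      have "act N k' \<tau> (act k' n (delta_comp k' \<sigma> \<delta>) x) \<in> U (delta_comp N (delta_comp k' \<sigma> \<delta>) \<tau>)"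
        if t: "delta_epi N k' \<tau>" for \<tau>
      proof -
        have "act N k' \<tau> (act k' n (delta_comp k' \<sigma> \<delta>) x) = act N n (delta_comp N (delta_comp k' \<sigma> \<delta>) \<tau>) x"
          using act_comp[OF ss epi_hom[OF t] epi_hom[OF kk(3)] xt] by simp
        moreover have "delta_epi N n (delta_comp N (delta_comp k' \<sigma> \<delta>) \<tau>)"
          using epi_comp[OF t kk(3)] .
        ultimately show ?thesis using ad unfolding admissible_def by simp
      qed
      moreover have "act k' n (delta_comp k' \<sigma> \<delta>) x \<in> topspace (X k')"
        using act_top[OF ss epi_hom[OF kk(3)] xt] .
      ultimately show ?thesis unfolding U_ext_def e1 by blast
    qed
    thus ?thesis unfolding U_big_def using act_top[OF ss sh xt] by blast
  qed
  have openB: "openin (X k) (U_big X act n N U k \<sigma>)"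
  proof -
    define F where "F = {(k', \<delta>). k' \<le> N \<and> delta_mono k' k \<delta> \<and> delta_epi k' n (delta_comp k' \<sigma> \<delta>)}"
    have "U_big X act n N U k \<sigma> = {y \<in> topspace (X k). \<forall>p\<in>F.
       act (fst p) k (snd p) y \<in> U_ext X act N U (fst p) (delta_comp (fst p) \<sigma> (snd p))}"
      unfolding U_big_def F_def by auto
    also have "openin (X k) \<dots>"
    proof (rule openin_all_finite)
      have "F \<subseteq> Sigma {0..N} (\<lambda>k'. {f. delta_hom k' k f})" unfolding F_def
        using mono_hom by auto
      thus "finite F" by (rule finite_subset) (simp add: finite_homs)
      fix p assume "p \<in> F"
      then obtain k' \<delta> where p: "p = (k', \<delta>)" "delta_mono k' k \<delta>" "delta_epi k' n (delta_comp k' \<sigma> \<delta>)"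
        unfolding F_def by auto
      show "openin (X k) {y \<in> topspace (X k). act (fst p) k (snd p) y \<in> U_ext X act N U (fst p) (delta_comp (fst p) \<sigma> (snd p))}"
        using p openin_continuous_map_preimage[OF act_cont[OF ss mono_hom[OF p(2)]] UE_open[OF ss ad p(3)]]
        by simp
    qed
    finally show ?thesis .
  qed
  have partb: "k \<le> N \<longrightarrow> U_big X act n N U k \<sigma> \<subseteq> U_ext X act N U k \<sigma>"
  proof (intro impI subsetI)
    fix y assume kN: "k \<le> N" and y: "y \<in> U_big X act n N U k \<sigma>"
    have yt: "y \<in> topspace (X k)" using y unfolding U_big_def by blast
    have "delta_comp k \<sigma> (delta_id k) = \<sigma>" using comp_id_right[OF sh] .
    hence "act k k (delta_id k) y \<in> U_ext X act N U k \<sigma>"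
      using y kN id_mono s unfolding U_big_def by (metis (no_types, lifting) mem_Collect_eq)
    thus "y \<in> U_ext X act N U k \<sigma>" using act_id[OF ss yt] by simp
  qed
  have partc: "\<forall>i \<delta>. delta_mono i k \<delta> \<longrightarrow> delta_epi i n (delta_comp i \<sigma> \<delta>) \<longrightarrow>
            act i k \<delta> ` U_big X act n N U k \<sigma> \<subseteq> U_big X act n N U i (delta_comp i \<sigma> \<delta>)"
    using pullB[OF _ s] mono_hom by blast
  have partd: "\<forall>k' \<tau>. delta_epi k' k \<tau> \<longrightarrow>
            act k' k \<tau> ` U_big X act n N U k \<sigma> \<subseteq> U_big X act n N U k' (delta_comp k' \<sigma> \<tau>)"
    using pullB[OF _ s] epi_hom epi_comp[OF _ s] by blast
  have parte: "(act k k' \<tau> ` topspace (X k') \<inter> U_big X act n N U k \<sigma> \<noteq> {} \<longleftrightarrow>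
             (\<exists>\<rho>. delta_epi k' n \<rho> \<and> \<sigma> = delta_comp k \<rho> \<tau>))"
    if t: "delta_epi k k' \<tau>" for k' \<tau>
  proof
    assume "\<exists>\<rho>. delta_epi k' n \<rho> \<and> \<sigma> = delta_comp k \<rho> \<tau>"
    then obtain \<rho> where r: "delta_epi k' n \<rho>" "\<sigma> = delta_comp k \<rho> \<tau>" by blast
    have "act k k' \<tau> (act k' n \<rho> x) = act k n \<sigma> x"
      using act_comp[OF ss epi_hom[OF t] epi_hom[OF r(1)] xt] r(2) by simp
    moreover have "act k' n \<rho> x \<in> topspace (X k')" using act_top[OF ss epi_hom[OF r(1)] xt] .
    ultimately show "act k k' \<tau> ` topspace (X k') \<inter> U_big X act n N U k \<sigma> \<noteq> {}"
      using memx by (metis IntI empty_iff image_eqI)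
  next
    assume "act k k' \<tau> ` topspace (X k') \<inter> U_big X act n N U k \<sigma> \<noteq> {}"
    then obtain z where zt: "z \<in> topspace (X k')" and zU: "act k k' \<tau> z \<in> U_big X act n N U k \<sigma>"
      by blast
    have fib: "\<sigma> a = \<sigma> b" if ab: "a \<le> k" "b \<le> k" "\<tau> a = \<tau> b" for a b
    proof (rule ccontr)
      assume ne: "\<sigma> a \<noteq> \<sigma> b"
      have san: "\<sigma> a \<le> n" "\<sigma> b \<le> n" using ab hom_val[OF sh] by auto
      define \<delta> where "\<delta> = restrict (\<lambda>i. if i = \<sigma> a then a else if i = \<sigma> b then b
                   else (SOME t. t \<le> k \<and> \<sigma> t = i)) {0..n}"
      have dv: "\<delta> i \<le> k \<and> \<sigma> (\<delta> i) = i" if "i \<le> n" for i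
      proof -
        have "\<exists>t. t \<le> k \<and> \<sigma> t = i" using epi_surj[OF s that] by blast
        hence "(SOME t. t \<le> k \<and> \<sigma> t = i) \<le> k \<and> \<sigma> (SOME t. t \<le> k \<and> \<sigma> t = i) = i"
          by (rule someI_ex)
        thus ?thesis unfolding \<delta>_def using that ab by auto
      qed
      have dh: "delta_hom n k \<delta>"
      proof (rule homI)
        show "\<delta> i \<le> k" if "i \<le> n" for i using dv that by blast
        show "\<delta> i = undefined" if "n < i" for i using that unfolding \<delta>_def by simp
        fix i j assume ij: "i \<le> j" "j \<le> n"
        show "\<delta> i \<le> \<delta> j"
        proof (rule ccontr)
          assume "\<not> \<delta> i \<le> \<delta> j"
          hence "\<sigma> (\<delta> j) \<le> \<sigma> (\<delta> i)" using hom_mono[OF sh] dv ij by (meson nat_le_linear order.trans)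
          hence "i = j" using dv ij by (metis order.trans le_antisym)
          thus False using \<open>\<not> \<delta> i \<le> \<delta> j\<close> by simp
        qed
      qed
      have dm: "delta_mono n k \<delta>" unfolding delta_mono_def
        using dh dv by (metis atLeastAtMost_iff inj_onI)
      have sdid: "delta_comp n \<sigma> \<delta> = delta_id n"
      proof
        fix i show "delta_comp n \<sigma> \<delta> i = delta_id n i"
          using dv by (cases "i \<le> n") (auto simp: comp_apply delta_id_def delta_comp_def compose_def)
      qed
      have idepi: "delta_epi n n (delta_id n)"
        by (rule epiI[OF id_hom]) (auto simp: delta_id_def)
      have w: "act n k \<delta> (act k k' \<tau> z) \<in> U_ext X act N U n (delta_id n)"
        using zU nN dm idepi sdid unfolding U_big_def by (metis (no_types, lifting) mem_Collect_eq)
      define g where "g = delta_comp n \<tau> \<delta>"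
      have gh: "delta_hom n k' g" unfolding g_def using hom_comp[OF dh epi_hom[OF t]] .
      have weq: "act n k \<delta> (act k k' \<tau> z) = act n k' g z"
        unfolding g_def using act_comp[OF ss dh epi_hom[OF t] zt] by simp
      obtain j e d where e: "delta_epi n j e" and d: "delta_mono j k' d" and gde: "g = delta_comp n d e"
        using factorization[OF gh] by blast
      have da: "\<delta> (\<sigma> a) = a" "\<delta> (\<sigma> b) = b" unfolding \<delta>_def using san ne by auto
      have "g (\<sigma> a) = g (\<sigma> b)" unfolding g_def using san da ab by (simp add: comp_apply)
      hence "d (e (\<sigma> a)) = d (e (\<sigma> b))" using gde san by (simp add: comp_apply)
      hence "e (\<sigma> a) = e (\<sigma> b)" using d san hom_val[OF epi_hom[OF e]]
        unfolding delta_mono_def by (meson atLeastAtMost_iff inj_onD le0)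
      hence "\<not> inj_on e {0..n}" using ne san by (meson atLeastAtMost_iff inj_onD le0)
      hence jn: "j < n" using epi_lt[OF e] by blast
      define \<tau>0 where "\<tau>0 = restrict (\<lambda>i. min i n) {0..N}"
      have t0h: "delta_hom N n \<tau>0" by (rule homI) (auto simp: \<tau>0_def)
      have t0: "delta_epi N n \<tau>0"
      proof (rule epiI[OF t0h])
        fix i assume "i \<le> n" thus "\<exists>a\<le>N. \<tau>0 a = i" using nN
          by (intro exI[of _ i]) (auto simp: \<tau>0_def)
      qed
      have "delta_comp N (delta_id n) \<tau>0 = \<tau>0" using comp_id_left[OF t0h] .
      hence inU: "act N n \<tau>0 (act n k' g z) \<in> U \<tau>0" using w weq t0 unfolding U_ext_def by auto
      have gzt: "act n k' g z = act n j e (act j k' d z)"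
        using act_comp[OF ss epi_hom[OF e] mono_hom[OF d] zt] gde by simp
      have vt: "act j k' d z \<in> topspace (X j)" using act_top[OF ss mono_hom[OF d] zt] .
      have "act N n \<tau>0 (act n k' g z) = act N j (delta_comp N e \<tau>0) (act j k' d z)"
        using gzt act_comp[OF ss t0h epi_hom[OF e] vt] by simp
      hence "U \<tau>0 \<inter> act N j (delta_comp N e \<tau>0) ` topspace (X j) \<noteq> {}"
        using inU vt by blast
      then obtain \<rho> where "delta_epi j n \<rho>"
        using ad t0 epi_comp[OF t0 e] unfolding admissible_def by blast
      thus False using epi_le jn by fastforce
    qed
    define \<rho> where "\<rho> = restrict (\<lambda>t. \<sigma> (SOME a. a \<le> k \<and> \<tau> a = t)) {0..k'}"
    have rs: "\<rho> t = \<sigma> a" if "a \<le> k" "\<tau> a = t" for a t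
    proof -
      have tk: "t \<le> k'" using that hom_val[OF epi_hom[OF t]] by blast
      have "\<exists>a'. a' \<le> k \<and> \<tau> a' = t" using that by blast
      hence "(SOME a. a \<le> k \<and> \<tau> a = t) \<le> k \<and> \<tau> (SOME a. a \<le> k \<and> \<tau> a = t) = t"
        by (rule someI_ex)
      hence "\<sigma> (SOME a. a \<le> k \<and> \<tau> a = t) = \<sigma> a" using fib that by metis
      thus ?thesis unfolding \<rho>_def using tk by simp
    qed
    have ex: "\<exists>a\<le>k. \<tau> a = t" if "t \<le> k'" for t using epi_surj[OF t that] .
    have rh: "delta_hom k' n \<rho>"
    proof (rule homI)
      show "\<rho> i \<le> n" if "i \<le> k'" for i using ex[OF that] rs hom_val[OF sh] by metis
      show "\<rho> i = undefined" if "k' < i" for i using that unfolding \<rho>_def by simp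
      fix i j assume ij: "i \<le> j" "j \<le> k'"
      obtain a where a: "a \<le> k" "\<tau> a = i" using ex ij by (meson order.trans)
      obtain b where b: "b \<le> k" "\<tau> b = j" using ex ij by blast
      show "\<rho> i \<le> \<rho> j"
      proof (rule ccontr)
        assume "\<not> \<rho> i \<le> \<rho> j"
        hence "\<sigma> b < \<sigma> a" using rs a b by simp
        hence "b < a" using hom_mono[OF sh, of a b] b(1) by (meson not_le leD)
        hence "\<tau> b \<le> \<tau> a" using hom_mono[OF epi_hom[OF t], of b a] a by simp
        hence "i = j" using a b ij by simp
        thus False using \<open>\<not> \<rho> i \<le> \<rho> j\<close> by simp
      qed
    qed
    have re: "delta_epi k' n \<rho>"
    proof (rule epiI[OF rh])
      fix i assume "i \<le> n"
      then obtain a where "a \<le> k" "\<sigma> a = i" using epi_surj[OF s] by blast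
      thus "\<exists>t\<le>k'. \<rho> t = i" using rs hom_val[OF epi_hom[OF t]] by metis
    qed
    have "\<sigma> = delta_comp k \<rho> \<tau>"
    proof
      fix a show "\<sigma> a = delta_comp k \<rho> \<tau> a"
      proof (cases "a \<le> k")
        case True thus ?thesis using rs comp_apply by metis
      next
        case False thus ?thesis using hom_ext[OF sh] by (simp add: delta_comp_def compose_def)
      qed
    qed
    thus "\<exists>\<rho>. delta_epi k' n \<rho> \<and> \<sigma> = delta_comp k \<rho> \<tau>" using re by blast
  qed
  show ?thesis using openB memx partb partc partd parte by blast
qed


end
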